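(* Let $\kappa,\lambda,\mu,\ell\in\mathbb{R}$ and $F(R)=\bigl(h-\lambda R-\tfrac{\kappa}{2}R^2\bigr)^2-(R^2-\mu^2)(R-\ell)$. (i) Let $\mu=0$, $\ell<0$ (so $R_{\min}=0$). There exists $h\in\mathbb{R}$ such that $R=0$ is a root of $F$ of multiplicity at least three if and only if $\ell=-\lambda^2$ (with $\lambda\ne0$). In that case $h=0$ and $F(R)=R^3\bigl(\kappa\lambda-1+\tfrac{\kappa^2}{4}R\bigr)$, so $F'''(0)=6(\kappa\lambda-1)$. (ii) Let $\ell=|\mu|>0$ (so $R_{\min}=\ell$). There exists $h$ such that $R=\ell$ is a root of $F$ of multiplicity at least three if and only if $(\lambda+\kappa\ell)^2=2\ell$. In that case $h=\lambda\ell+\tfrac{\kappa}{2}\ell^2$ and $F(R)=(R-\ell)^3\bigl(\kappa(\lambda+\kappa\ell)-1+\tfrac{\kappa^2}{4}(R-\ell)\bigr)$, so $F'''(\ell)=6\bigl(\kappa(\lambda+\kappa\ell)-1\bigr)$. (iii) Consequently, for $\kappa\ne0$, the root $R_{\min}$ has multiplicity exactly four (degenerate Hamiltonian Hopf bifurcation) precisely at $(\lambda,\mu,\ell)=(1/\kappa,0,-1/\kappa^2)$ and $(\lambda,\mu,\ell)=(1/(2\kappa),\pm1/(2\kappa^2),1/(2\kappa^2))$. (iv) For $\kappa=1$: the Hamiltonian Hopf set with $\mu=0,\ell<0$ is $\{(\lambda,0,-\lambda^2):\lambda\ne0\}$, subcritical ($F'''(0)<0$) for $\lambda<1$ and supercritical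 ($F'''(0)>0$) for $\lambda>1$; the Hamiltonian Hopf set with $\ell=|\mu|>0$ consists of the points $(\lambda,\pm\ell,\ell)$ with $\lambda\le\tfrac12$ and $\ell=1-\lambda\pm\sqrt{1-2\lambda}>0$, where $F'''(\ell)=\pm6\sqrt{1-2\lambda}$, so the branch $\ell=1-\lambda-\sqrt{1-2\lambda}$ ($\lambda<\tfrac12$, $\lambda\neq0$) is subcritical and the branch $\ell=1-\lambda+\sqrt{1-2\lambda}$ ($\lambda<\tfrac12$) is supercritical, the two meeting at the degenerate point $(\tfrac12,\pm\tfrac12,\tfrac12)$.
   Context: $R_{\min}=\max(|\mu|,\ell)$. A Hamiltonian Hopf bifurcation of the reduced system (energy $\mathcal{H}_\lambda=X+\lambda R+\tfrac{\kappa}{2}R^2$ on $\mathcal{P}_{\mu\ell}=\{R\ge R_{\min},\,X^2+Y^2=(R^2-\mu^2)(R-\ell)\}$, which is singular at its tip $(R_{\min},0,0)$ exactly when $\ell=|\mu|$ or $\mu=0,\ell\le0$) is characterised by $F$ having a root of multiplicity at least three at $R=R_{\min}$; it is called supercritical if $F'''(R_{\min})>0$, subcritical if $F'''(R_{\min})<0$, and degenerate if $F'''(R_{\min})=0$. *)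

theory Defs
  imports "HOL-Computational_Algebra.Polynomial"
begin

definition Fpoly :: "real \<Rightarrow> real \<Rightarrow> real \<Rightarrow> real \<Rightarrow> real \<Rightarrow> real poly" where
  "Fpoly k lam mu l h = [:h, -lam, -k/2:]^2 - [:-(mu^2), 0, 1:] * [:-l, 1:]"

definition Rmin :: "real \<Rightarrow> real \<Rightarrow> real" where
  "Rmin mu l = max \<bar>mu\<bar> l"

definition third_deriv_at :: "real poly \<Rightarrow> real \<Rightarrow> real" where
  "third_deriv_at p x = poly ((pderiv ^^ 3) p) x"

end

theory Submission
  imports Defs
begin


definition "cc0 k lam mu l h a = (h - lam*a - k/2*a^2)^2 - (a^2-mu^2)*(a-l)"
definition "cc1 k lam mu l h a = 2*(h - lam*a - k/2*a^2)*(-lam-k*a) - (a^2-mu^2) - 2*a*(a-l)"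
definition "cc2 k lam mu l h a = (-lam-k*a)^2 + 2*(h - lam*a - k/2*a^2)*(-k/2) - (3*a-l)"
definition "dd k lam a = 2*(-lam-k*a)*(-k/2) - 1"

lemma F_decomp:
  "Fpoly k lam mu l h = [:-a,1:]^3 * (smult (dd k lam a) 1 + smult (k^2/4) [:-a,1:])
     + smult (cc0 k lam mu l h a) 1 + smult (cc1 k lam mu l h a) [:-a,1:] + smult (cc2 k lam mu l h a) ([:-a,1:]^2)"
  apply (rule poly_eq_poly_eq_iff[THEN iffD1])
  apply (rule ext)
  apply (simp add: Fpoly_def cc0_def cc1_def cc2_def dd_def power2_eq_square power3_eq_cube algebra_simps)
  done

lemma F_nz: "Fpoly k lam mu l h \<noteq> 0"
proof
  assume "Fpoly k lam mu l h = 0"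
  hence "coeff (Fpoly k lam mu l h) 3 = 0" "coeff (Fpoly k lam mu l h) 4 = 0" by simp_all
  thus False by (simp add: Fpoly_def power2_eq_square numeral_eq_Suc)
qed

lemma td: "third_deriv_at (Fpoly k lam mu l h) a = 6 * dd k lam a"
  apply (subst F_decomp[of _ _ _ _ _ a])
  apply (simp add: third_deriv_at_def numeral_3_eq_3 pderiv_mult pderiv_add pderiv_smult pderiv_power_Suc pderiv_pCons power2_eq_square algebra_simps)
  done

lemma r_zero: fixes c0 c1 c2 a :: real
  assumes "\<And>R. poly (smult c0 1 + smult c1 [:-a,1:] + smult c2 ([:-a,1:]^2)) R = 0"
  shows "c0 = 0 \<and> c1 = 0 \<and> c2 = 0"
proof -
  have "c0 = 0" using assms[of a] by (simp add: power2_eq_square algebra_simps)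
  moreover have "c0 + c1 + c2 = 0" using assms[of "a+1"] by (simp add: power2_eq_square algebra_simps)
  moreover have "c0 - c1 + c2 = 0" using assms[of "a-1"] by (simp add: power2_eq_square algebra_simps)
  ultimately show ?thesis by linarith
qed

lemma ord3: "3 \<le> order a (Fpoly k lam mu l h) \<longleftrightarrow>
   cc0 k lam mu l h a = 0 \<and> cc1 k lam mu l h a = 0 \<and> cc2 k lam mu l h a = 0"
proof -
  let ?x = "[:-a,1:] :: real poly"
  let ?r = "smult (cc0 k lam mu l h a) 1 + smult (cc1 k lam mu l h a) ?x + smult (cc2 k lam mu l h a) (?x^2)"
  have "3 \<le> order a (Fpoly k lam mu l h) \<longleftrightarrow> ?x^3 dvd Fpoly k lam mu l h"
    using order_divides F_nz by blast
  also have "\<dots> \<longleftrightarrow> ?x^3 dvd ?r"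
  proof -
    have e: "Fpoly k lam mu l h = ?x^3 * (smult (dd k lam a) 1 + smult (k^2/4) ?x) + ?r"
      by (subst F_decomp[of _ _ _ _ _ a]) (simp add: add.assoc)
    show ?thesis unfolding e by (rule dvd_add_right_iff) (rule dvd_triv_left)
  qed
  also have "\<dots> \<longleftrightarrow> ?r = 0"
  proof
    assume d: "?x^3 dvd ?r"
    show "?r = 0"
    proof (rule ccontr)
      assume nz: "?r \<noteq> 0"
      have "degree (?x^3) \<le> degree ?r" using dvd_imp_degree_le[OF d nz] .
      moreover have "degree ?r \<le> 2"
      proof -
        have "degree (smult (cc0 k lam mu l h a) (1::real poly)) \<le> 2" by simp
        moreover have "degree (smult (cc1 k lam mu l h a) ?x) \<le> 2" by simp
        moreover have "degree (smult (cc2 k lam mu l h a) (?x^2)) \<le> 2"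
          by (rule order.trans[OF degree_smult_le]) (simp add: degree_power_eq)
        ultimately show ?thesis by (intro degree_add_le) auto
      qed
      ultimately show False by (simp add: degree_power_eq)
    qed
  qed simp
  also have "\<dots> \<longleftrightarrow> cc0 k lam mu l h a = 0 \<and> cc1 k lam mu l h a = 0 \<and> cc2 k lam mu l h a = 0"
  proof
    assume "?r = 0"
    hence "\<And>R. poly ?r R = 0" by simp
    thus "cc0 k lam mu l h a = 0 \<and> cc1 k lam mu l h a = 0 \<and> cc2 k lam mu l h a = 0"
      by (rule r_zero)
  qed simp
  finally show ?thesis .
qed

lemma ordeq: assumes "3 \<le> order a (Fpoly k lam mu l h)" "k \<noteq> 0"
  shows "order a (Fpoly k lam mu l h) = (if dd k lam a = 0 then 4 else 3)"
proof -
  let ?x = "[:-a,1:] :: real poly"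
  let ?q = "smult (dd k lam a) 1 + smult (k^2/4) ?x"
  have c: "cc0 k lam mu l h a = 0" "cc1 k lam mu l h a = 0" "cc2 k lam mu l h a = 0"
    using assms ord3 by auto
  have F: "Fpoly k lam mu l h = ?x^3 * ?q" using F_decomp[of k lam mu l h a] c by simp
  have "?x^3 * ?q \<noteq> 0" using F F_nz by metis
  hence "order a (?x^3 * ?q) = order a (?x^3) + order a ?q" by (rule order_mult)
  hence "order a (Fpoly k lam mu l h) = 3 + order a ?q" by (simp only: F order_power_n_n)
  moreover have "order a ?q = (if dd k lam a = 0 then 1 else 0)"
  proof (cases "dd k lam a = 0")
    case True
    hence e: "?q = smult (k^2/4) ?x" by simp
    have "order a (smult (k^2/4) ?x) = order a ?x" by (rule order_smult) (use assms(2) in simp)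
    moreover have "order a ?x = 1" using order_power_n_n[of a 1] by (simp only: power_one_right)
    ultimately show ?thesis using True e by simp
  next
    case False
    hence "poly ?q a \<noteq> 0" by simp
    hence "order a ?q = 0" by (rule order_0I)
    then show ?thesis using False by simp
  qed
  ultimately show ?thesis by simp
qed

lemma poly_F3: assumes "3 \<le> order a (Fpoly k lam mu l h)"
  shows "poly (Fpoly k lam mu l h) R = (R - a)^3 * (dd k lam a + k^2/4 * (R - a))"
proof -
  have c: "cc0 k lam mu l h a = 0" "cc1 k lam mu l h a = 0" "cc2 k lam mu l h a = 0"
    using assms ord3 by auto
  show ?thesis by (subst F_decomp[of _ _ _ _ _ a]) (simp add: c power3_eq_cube field_simps)
qed

lemma i_char: "3 \<le> order 0 (Fpoly k lam 0 l h) \<longleftrightarrow> h = 0 \<and> l = - (lam^2)"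
  by (auto simp: ord3 cc0_def cc1_def cc2_def)

lemma aux_g: fixes g x y z k :: real
  shows "(g^2 = 0 \<and> 2*g*x = 0 \<and> y - k*g - z = 0) \<longleftrightarrow> (g = 0 \<and> y = z)"
  by auto

lemma ii_char: assumes "mu^2 = l^2"
  shows "3 \<le> order l (Fpoly k lam mu l h) \<longleftrightarrow> h = lam*l + k/2*l^2 \<and> (lam+k*l)^2 = 2*l"
proof -
  have e0: "cc0 k lam mu l h l = (h - lam*l - k/2*l^2)^2" by (simp add: cc0_def assms)
  have e1: "cc1 k lam mu l h l = 2*(h - lam*l - k/2*l^2)*(-lam-k*l)" by (simp add: cc1_def assms)
  have e2: "cc2 k lam mu l h l = (lam+k*l)^2 - k*(h - lam*l - k/2*l^2) - 2*l"
    by (simp add: cc2_def power2_eq_square algebra_simps)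
  have "3 \<le> order l (Fpoly k lam mu l h) \<longleftrightarrow> (h - lam*l - k/2*l^2) = 0 \<and> (lam+k*l)^2 = 2*l"
    unfolding ord3 e0 e1 e2 by (rule aux_g)
  thus ?thesis by auto
qed

lemma part1: "\<forall>k lam l. l < 0 \<longrightarrow>
      ((\<exists>h. order 0 (Fpoly k lam 0 l h) \<ge> 3) \<longleftrightarrow> (l = - (lam^2) \<and> lam \<noteq> 0)) \<and>
      (\<forall>h. order 0 (Fpoly k lam 0 l h) \<ge> 3 \<longrightarrow>
          h = 0 \<and>
          (\<forall>R. poly (Fpoly k lam 0 l h) R = R^3 * (k * lam - 1 + k^2 / 4 * R)) \<and>
          third_deriv_at (Fpoly k lam 0 l h) 0 = 6 * (k * lam - 1))"
proof (intro allI impI conjI)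
  fix k lam l :: real assume l: "l < 0"
  show "(\<exists>h. order 0 (Fpoly k lam 0 l h) \<ge> 3) \<longleftrightarrow> (l = - (lam^2) \<and> lam \<noteq> 0)"
    using l by (auto simp: i_char)
  fix h assume o: "order 0 (Fpoly k lam 0 l h) \<ge> 3"
  show "h = 0" using o by (simp add: i_char)
  show "poly (Fpoly k lam 0 l h) R = R^3 * (k * lam - 1 + k^2 / 4 * R)" for R
    using poly_F3[OF o] by (simp add: dd_def)
  show "third_deriv_at (Fpoly k lam 0 l h) 0 = 6 * (k * lam - 1)"
    by (simp add: td dd_def)
qed

lemma part2: "\<forall>k lam mu l. l = \<bar>mu\<bar> \<and> l > 0 \<longrightarrow>
      ((\<exists>h. order l (Fpoly k lam mu l h) \<ge> 3) \<longleftrightarrow> (lam + k * l)^2 = 2 * l) \<and>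
      (\<forall>h. order l (Fpoly k lam mu l h) \<ge> 3 \<longrightarrow>
          h = lam * l + k / 2 * l^2 \<and>
          (\<forall>R. poly (Fpoly k lam mu l h) R =
                 (R - l)^3 * (k * (lam + k * l) - 1 + k^2 / 4 * (R - l))) \<and>
          third_deriv_at (Fpoly k lam mu l h) l = 6 * (k * (lam + k * l) - 1))"
proof (intro allI impI conjI)
  fix k lam mu l :: real assume l: "l = \<bar>mu\<bar> \<and> l > 0"
  hence m: "mu^2 = l^2" by simp
  show "(\<exists>h. order l (Fpoly k lam mu l h) \<ge> 3) \<longleftrightarrow> (lam + k * l)^2 = 2 * l"
    by (auto simp: ii_char[OF m])
  fix h assume o: "order l (Fpoly k lam mu l h) \<ge> 3"
  show "h = lam * l + k / 2 * l^2" using o by (simp add: ii_char[OF m])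
  show "poly (Fpoly k lam mu l h) R = (R - l)^3 * (k * (lam + k * l) - 1 + k^2 / 4 * (R - l))" for R
    using poly_F3[OF o] by (simp add: dd_def algebra_simps)
  show "third_deriv_at (Fpoly k lam mu l h) l = 6 * (k * (lam + k * l) - 1)"
    by (simp add: td dd_def algebra_simps)
qed

lemma ord4: assumes "k \<noteq> 0"
  shows "order a (Fpoly k lam mu l h) = 4 \<longleftrightarrow> 3 \<le> order a (Fpoly k lam mu l h) \<and> dd k lam a = 0"
  using ordeq[OF _ assms, of a lam mu l h] by (cases "3 \<le> order a (Fpoly k lam mu l h)") auto

lemma part3_fwd:
  fixes k lam mu l h :: real
  assumes k: "k \<noteq> 0" and o: "order (Rmin mu l) (Fpoly k lam mu l h) = 4"
  shows "(lam, mu, l) = (1 / k, 0, - 1 / k^2) \<or>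
         (lam, mu, l) = (1 / (2 * k), 1 / (2 * k^2), 1 / (2 * k^2)) \<or>
         (lam, mu, l) = (1 / (2 * k), - 1 / (2 * k^2), 1 / (2 * k^2))"
proof -
  define a where "a = Rmin mu l"
  have o3: "3 \<le> order a (Fpoly k lam mu l h)" and d: "dd k lam a = 0"
    using ord4[OF k] o unfolding a_def by auto
  have c: "cc0 k lam mu l h a = 0" "cc1 k lam mu l h a = 0" "cc2 k lam mu l h a = 0"
    using o3 ord3 by auto
  have a1: "a \<ge> \<bar>mu\<bar>" "a \<ge> l" "a = \<bar>mu\<bar> \<or> a = l" unfolding a_def Rmin_def by auto
  have a0: "a \<ge> 0" using a1 by linarith
  have "\<bar>mu\<bar>^2 \<le> a^2" by (rule power_mono) (use a1 in auto)
  hence p1: "a^2 - mu^2 \<ge> 0" by simp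
  have p2: "a - l \<ge> 0" using a1 by simp
  have P0: "(a^2 - mu^2) * (a - l) = 0"
  proof (cases "a = \<bar>mu\<bar>")
    case True
    hence "a^2 = mu^2" by simp
    thus ?thesis by simp
  next
    case False
    hence "a = l" using a1 by blast
    thus ?thesis by simp
  qed
  define g0 where "g0 = h - lam*a - k/2*a^2"
  have e0: "cc0 k lam mu l h a = g0^2 - (a^2 - mu^2) * (a - l)" by (simp add: cc0_def g0_def)
  have e1: "cc1 k lam mu l h a = 2*g0*(-lam-k*a) - (a^2 - mu^2) - 2*a*(a-l)" by (simp add: cc1_def g0_def)
  have e2: "cc2 k lam mu l h a = (-lam-k*a)^2 + 2*g0*(-k/2) - (3*a - l)" by (simp add: cc2_def g0_def)
  have "g0^2 = 0" using c(1) P0 unfolding e0 by simp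
  hence g0: "g0 = 0" by simp
  have "(a^2 - mu^2) + 2*a*(a-l) = 0" using c(2) g0 unfolding e1 by simp
  moreover have "2*a*(a-l) \<ge> 0" using a0 p2 by simp
  ultimately have q1: "a^2 = mu^2" and q2: "a*(a-l) = 0" using p1 by linarith+
  have c2: "(lam + k*a)^2 - (3*a - l) = 0" using c(3) g0 unfolding e2 by (simp add: power2_eq_square algebra_simps)
  have d2: "k*(lam + k*a) = 1" using d unfolding dd_def by (simp add: algebra_simps)
  hence lk: "lam + k*a = 1/k" using k by (simp add: field_simps)
  show ?thesis
  proof (cases "a = 0")
    case True
    hence "mu = 0" using q1 by simp
    moreover have "lam = 1/k" using lk True by simp
    moreover have "l = - 1/k^2" using c2 True lk by (simp add: power_divide)
    ultimately show ?thesis by simp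
  next
    case False
    hence al: "a = l" using q2 by simp
    have l2: "l = 1/(2*k^2)" using c2 lk al by (simp add: power_divide field_simps)
    have lam2: "lam = 1/(2*k)" using lk al l2 k by (simp add: field_simps power2_eq_square)
    have "mu = l \<or> mu = -l" using q1 al by (metis power2_eq_iff)
    thus ?thesis using l2 lam2 by auto
  qed
qed

lemma part3: "\<forall>k lam mu l. k \<noteq> 0 \<longrightarrow>
      ((\<exists>h. order (Rmin mu l) (Fpoly k lam mu l h) = 4) \<longleftrightarrow>
        ((lam, mu, l) = (1 / k, 0, - 1 / k^2) \<or>
         (lam, mu, l) = (1 / (2 * k), 1 / (2 * k^2), 1 / (2 * k^2)) \<or>
         (lam, mu, l) = (1 / (2 * k), - 1 / (2 * k^2), 1 / (2 * k^2))))"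
proof (intro allI impI iffI)
  fix k lam mu l :: real assume k: "k \<noteq> 0"
  assume "\<exists>h. order (Rmin mu l) (Fpoly k lam mu l h) = 4"
  then obtain h where "order (Rmin mu l) (Fpoly k lam mu l h) = 4" by blast
  from part3_fwd[OF k this] show "(lam, mu, l) = (1 / k, 0, - 1 / k^2) \<or>
         (lam, mu, l) = (1 / (2 * k), 1 / (2 * k^2), 1 / (2 * k^2)) \<or>
         (lam, mu, l) = (1 / (2 * k), - 1 / (2 * k^2), 1 / (2 * k^2))" .
next
  fix k lam mu l :: real assume k: "k \<noteq> 0"
  assume H: "(lam, mu, l) = (1 / k, 0, - 1 / k^2) \<or>
         (lam, mu, l) = (1 / (2 * k), 1 / (2 * k^2), 1 / (2 * k^2)) \<or>
         (lam, mu, l) = (1 / (2 * k), - 1 / (2 * k^2), 1 / (2 * k^2))"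
  show "\<exists>h. order (Rmin mu l) (Fpoly k lam mu l h) = 4"
  proof (cases "(lam, mu, l) = (1 / k, 0, - 1 / k^2)")
    case True
    hence v: "lam = 1/k" "mu = 0" "l = - 1/k^2" by auto
    have r: "Rmin mu l = 0" using v k unfolding Rmin_def by simp
    have "3 \<le> order 0 (Fpoly k lam 0 l 0)" using v by (simp add: i_char power_divide)
    moreover have "dd k lam 0 = 0" using v k by (simp add: dd_def)
    ultimately show ?thesis using ord4[OF k] r v by metis
  next
    case False
    hence v: "lam = 1/(2*k)" "\<bar>mu\<bar> = 1/(2*k^2)" "l = 1/(2*k^2)" using H by auto
    have r: "Rmin mu l = l" using v unfolding Rmin_def by simp
    have m: "mu^2 = l^2" using v by (metis power2_abs)
    have "(lam + k*l)^2 = 2*l" unfolding v(1) v(3) using k by (simp add: power2_eq_square field_simps)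
    hence "3 \<le> order l (Fpoly k lam mu l (lam*l + k/2*l^2))"
      by (simp add: ii_char[OF m])
    moreover have "dd k lam l = 0" using v k by (simp add: dd_def field_simps power2_eq_square)
    ultimately show ?thesis using ord4[OF k] r by metis
  qed
qed

lemma part4a: "{(lam, mu, l). mu = 0 \<and> l < 0 \<and> (\<exists>h. order 0 (Fpoly 1 lam mu l h) \<ge> 3)}
      = {(lam, 0, - (lam^2)) | lam. lam \<noteq> 0}"
  by (auto simp: i_char)

lemma part4b: "\<forall>lam h. lam \<noteq> 0 \<longrightarrow> order 0 (Fpoly 1 lam 0 (- (lam^2)) h) \<ge> 3 \<longrightarrow>
      (lam < 1 \<longrightarrow> third_deriv_at (Fpoly 1 lam 0 (- (lam^2)) h) 0 < 0) \<and>
      (lam > 1 \<longrightarrow> third_deriv_at (Fpoly 1 lam 0 (- (lam^2)) h) 0 > 0)"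
  by (simp add: td dd_def)

lemma quad: fixes lam l :: real
  shows "(lam + l)^2 = 2*l \<longleftrightarrow> lam \<le> 1/2 \<and> (l = 1 - lam + sqrt (1 - 2 * lam) \<or> l = 1 - lam - sqrt (1 - 2 * lam))"
proof
  assume h: "(lam + l)^2 = 2*l"
  hence e: "(l - (1 - lam))^2 = 1 - 2*lam" by (simp add: power2_eq_square algebra_simps)
  hence "1 - 2*lam \<ge> 0" by (metis zero_le_power2)
  hence "lam \<le> 1/2" by simp
  moreover have "sqrt (1 - 2*lam) = \<bar>l - (1 - lam)\<bar>" using e by (metis real_sqrt_abs)
  ultimately show "lam \<le> 1/2 \<and> (l = 1 - lam + sqrt (1 - 2 * lam) \<or> l = 1 - lam - sqrt (1 - 2 * lam))"
    by (cases "l - (1 - lam) \<ge> 0") auto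
next
  assume h: "lam \<le> 1/2 \<and> (l = 1 - lam + sqrt (1 - 2 * lam) \<or> l = 1 - lam - sqrt (1 - 2 * lam))"
  hence s: "(sqrt (1 - 2*lam))^2 = 1 - 2*lam" by simp
  have "(l - (1 - lam))^2 = 1 - 2*lam" using h s by auto
  thus "(lam + l)^2 = 2*l" by (simp add: power2_eq_square algebra_simps)
qed

lemma part4c: "{(lam, mu, l). l = \<bar>mu\<bar> \<and> l > 0 \<and> (\<exists>h. order l (Fpoly 1 lam mu l h) \<ge> 3)}
      = {(lam, mu, l). lam \<le> 1/2 \<and> \<bar>mu\<bar> = l \<and> l > 0 \<and>
           (l = 1 - lam + sqrt (1 - 2 * lam) \<or> l = 1 - lam - sqrt (1 - 2 * lam))}"
proof -
  have "(l = \<bar>mu\<bar> \<and> l > 0 \<and> (\<exists>h. order l (Fpoly 1 lam mu l h) \<ge> 3)) \<longleftrightarrow>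
     (lam \<le> 1/2 \<and> \<bar>mu\<bar> = l \<and> l > 0 \<and>
           (l = 1 - lam + sqrt (1 - 2 * lam) \<or> l = 1 - lam - sqrt (1 - 2 * lam)))" for lam mu l :: real
  proof (cases "l = \<bar>mu\<bar>")
    case True
    hence m: "mu^2 = l^2" by simp
    have "(\<exists>h. order l (Fpoly 1 lam mu l h) \<ge> 3) \<longleftrightarrow> (lam + 1*l)^2 = 2*l"
      by (auto simp: ii_char[OF m])
    then show ?thesis using True quad[of lam l] by auto
  qed auto
  thus ?thesis by auto
qed

lemma part4d: "\<forall>lam mu l h. lam \<le> 1/2 \<and> \<bar>mu\<bar> = l \<and> l = 1 - lam + sqrt (1 - 2 * lam) \<and>
        order l (Fpoly 1 lam mu l h) \<ge> 3 \<longrightarrow>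
      l > 0 \<and> third_deriv_at (Fpoly 1 lam mu l h) l = 6 * sqrt (1 - 2 * lam) \<and>
      (lam < 1/2 \<longrightarrow> third_deriv_at (Fpoly 1 lam mu l h) l > 0)"
proof (intro allI impI conjI)
  fix lam mu l h :: real
  assume H: "lam \<le> 1/2 \<and> \<bar>mu\<bar> = l \<and> l = 1 - lam + sqrt (1 - 2 * lam) \<and>
        order l (Fpoly 1 lam mu l h) \<ge> 3"
  have s0: "sqrt (1 - 2*lam) \<ge> 0" using H by simp
  show "l > 0" using H s0 by linarith
  have "third_deriv_at (Fpoly 1 lam mu l h) l = 6 * (lam + l - 1)"
    by (simp add: td dd_def algebra_simps)
  thus t: "third_deriv_at (Fpoly 1 lam mu l h) l = 6 * sqrt (1 - 2 * lam)"
    using H by simp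
  assume "lam < 1/2"
  hence "sqrt (1 - 2*lam) > 0" by simp
  thus "third_deriv_at (Fpoly 1 lam mu l h) l > 0" using t by simp
qed

lemma part4e: "\<forall>lam mu l h. lam \<le> 1/2 \<and> \<bar>mu\<bar> = l \<and> l = 1 - lam - sqrt (1 - 2 * lam) \<and> l > 0 \<and>
        order l (Fpoly 1 lam mu l h) \<ge> 3 \<longrightarrow>
      lam \<noteq> 0 \<and> third_deriv_at (Fpoly 1 lam mu l h) l = - 6 * sqrt (1 - 2 * lam) \<and>
      (lam < 1/2 \<longrightarrow> third_deriv_at (Fpoly 1 lam mu l h) l < 0)"
proof (intro allI impI conjI)
  fix lam mu l h :: real
  assume H: "lam \<le> 1/2 \<and> \<bar>mu\<bar> = l \<and> l = 1 - lam - sqrt (1 - 2 * lam) \<and> l > 0 \<and>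
        order l (Fpoly 1 lam mu l h) \<ge> 3"
  show "lam \<noteq> 0"
  proof
    assume "lam = 0"
    hence "l = 0" using H by simp
    thus False using H by simp
  qed
  have "third_deriv_at (Fpoly 1 lam mu l h) l = 6 * (lam + l - 1)"
    by (simp add: td dd_def algebra_simps)
  thus t: "third_deriv_at (Fpoly 1 lam mu l h) l = - 6 * sqrt (1 - 2 * lam)"
    using H by simp
  assume "lam < 1/2"
  hence "sqrt (1 - 2*lam) > 0" by simp
  thus "third_deriv_at (Fpoly 1 lam mu l h) l < 0" using t by simp
qed

lemma part4f: "\<forall>mu h. \<bar>mu\<bar> = 1/2 \<longrightarrow> order (1/2) (Fpoly 1 (1/2) mu (1/2) h) \<ge> 3 \<longrightarrow>
      third_deriv_at (Fpoly 1 (1/2) mu (1/2) h) (1/2) = 0 \<and>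
      order (1/2) (Fpoly 1 (1/2) mu (1/2) h) = 4"
proof (intro allI impI conjI)
  fix mu h :: real
  assume "\<bar>mu\<bar> = 1/2" and o: "order (1/2) (Fpoly 1 (1/2) mu (1/2) h) \<ge> 3"
  have d: "dd (1::real) (1/2) (1/2) = 0" by (simp add: dd_def)
  show "third_deriv_at (Fpoly 1 (1/2) mu (1/2) h) (1/2) = 0" by (simp add: td d)
  show "order (1/2) (Fpoly 1 (1/2) mu (1/2) h) = 4" using ordeq[OF o] d by simp
qed


theorem mainTheorem6:
  shows
  \<comment> \<open>(i)\<close>
  "(\<forall>k lam l. l < 0 \<longrightarrow>
      ((\<exists>h. order 0 (Fpoly k lam 0 l h) \<ge> 3) \<longleftrightarrow> (l = - (lam^2) \<and> lam \<noteq> 0)) \<and>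
      (\<forall>h. order 0 (Fpoly k lam 0 l h) \<ge> 3 \<longrightarrow>
          h = 0 \<and>
          (\<forall>R. poly (Fpoly k lam 0 l h) R = R^3 * (k * lam - 1 + k^2 / 4 * R)) \<and>
          third_deriv_at (Fpoly k lam 0 l h) 0 = 6 * (k * lam - 1)))
   \<and>
  \<comment> \<open>(ii)\<close>
   (\<forall>k lam mu l. l = \<bar>mu\<bar> \<and> l > 0 \<longrightarrow>
      ((\<exists>h. order l (Fpoly k lam mu l h) \<ge> 3) \<longleftrightarrow> (lam + k * l)^2 = 2 * l) \<and>
      (\<forall>h. order l (Fpoly k lam mu l h) \<ge> 3 \<longrightarrow>
          h = lam * l + k / 2 * l^2 \<and>
          (\<forall>R. poly (Fpoly k lam mu l h) R =
                 (R - l)^3 * (k * (lam + k * l) - 1 + k^2 / 4 * (R - l))) \<and>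
          third_deriv_at (Fpoly k lam mu l h) l = 6 * (k * (lam + k * l) - 1)))
   \<and>
  \<comment> \<open>(iii)\<close>
   (\<forall>k lam mu l. k \<noteq> 0 \<longrightarrow>
      ((\<exists>h. order (Rmin mu l) (Fpoly k lam mu l h) = 4) \<longleftrightarrow>
        ((lam, mu, l) = (1 / k, 0, - 1 / k^2) \<or>
         (lam, mu, l) = (1 / (2 * k), 1 / (2 * k^2), 1 / (2 * k^2)) \<or>
         (lam, mu, l) = (1 / (2 * k), - 1 / (2 * k^2), 1 / (2 * k^2)))))
   \<and>
  \<comment> \<open>(iv), kappa = 1, family mu = 0, l < 0\<close>
   {(lam, mu, l). mu = 0 \<and> l < 0 \<and> (\<exists>h. order 0 (Fpoly 1 lam mu l h) \<ge> 3)}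
      = {(lam, 0, - (lam^2)) | lam. lam \<noteq> 0}
   \<and>
   (\<forall>lam h. lam \<noteq> 0 \<longrightarrow> order 0 (Fpoly 1 lam 0 (- (lam^2)) h) \<ge> 3 \<longrightarrow>
      (lam < 1 \<longrightarrow> third_deriv_at (Fpoly 1 lam 0 (- (lam^2)) h) 0 < 0) \<and>
      (lam > 1 \<longrightarrow> third_deriv_at (Fpoly 1 lam 0 (- (lam^2)) h) 0 > 0))
   \<and>
  \<comment> \<open>(iv), kappa = 1, family l = |mu| > 0\<close>
   {(lam, mu, l). l = \<bar>mu\<bar> \<and> l > 0 \<and> (\<exists>h. order l (Fpoly 1 lam mu l h) \<ge> 3)}
      = {(lam, mu, l). lam \<le> 1/2 \<and> \<bar>mu\<bar> = l \<and> l > 0 \<and>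
           (l = 1 - lam + sqrt (1 - 2 * lam) \<or> l = 1 - lam - sqrt (1 - 2 * lam))}
   \<and>
   (\<forall>lam mu l h. lam \<le> 1/2 \<and> \<bar>mu\<bar> = l \<and> l = 1 - lam + sqrt (1 - 2 * lam) \<and>
        order l (Fpoly 1 lam mu l h) \<ge> 3 \<longrightarrow>
      l > 0 \<and> third_deriv_at (Fpoly 1 lam mu l h) l = 6 * sqrt (1 - 2 * lam) \<and>
      (lam < 1/2 \<longrightarrow> third_deriv_at (Fpoly 1 lam mu l h) l > 0))
   \<and>
   (\<forall>lam mu l h. lam \<le> 1/2 \<and> \<bar>mu\<bar> = l \<and> l = 1 - lam - sqrt (1 - 2 * lam) \<and> l > 0 \<and>
        order l (Fpoly 1 lam mu l h) \<ge> 3 \<longrightarrow>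
      lam \<noteq> 0 \<and> third_deriv_at (Fpoly 1 lam mu l h) l = - 6 * sqrt (1 - 2 * lam) \<and>
      (lam < 1/2 \<longrightarrow> third_deriv_at (Fpoly 1 lam mu l h) l < 0))
   \<and>
   (\<forall>mu h. \<bar>mu\<bar> = 1/2 \<longrightarrow> order (1/2) (Fpoly 1 (1/2) mu (1/2) h) \<ge> 3 \<longrightarrow>
      third_deriv_at (Fpoly 1 (1/2) mu (1/2) h) (1/2) = 0 \<and>
      order (1/2) (Fpoly 1 (1/2) mu (1/2) h) = 4)"
  by (intro conjI; rule part1 part2 part3 part4a part4b part4c part4d part4e part4f)

end
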